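(* If $\mathsf{A}^{i+1}=\{0\}$, then $[\varpi]^i\colon\mathsf{B}^i\to\mathsf{A}^i$ is surjective.
   Context: Let $A$ be the graded commutative algebra of functions of a graded manifold with a flat $P_\infty$-structure $\lambda_i$, $\mathrm{d}:=\lambda_1$, $\mathsf{A}=H_{\mathrm{d}}(A)$. Given a flat $A_\infty$ deformation quantization $\mu_i$ on $A[[\epsilon]]$, set $\tau_i=\epsilon^{i-2}\mu_i$, $\delta:=\tau_1=\sum_{n\ge0}\epsilon^n\mathrm{d}_n$ with $\mathrm{d}_0=\mathrm{d}$, and $\mathsf{B}$ the $\delta$-cohomology of $A[[\epsilon]]$. Let $\varpi\colon A[[\epsilon]]\to A$, $\sum\epsilon^n a_n\mapsto a_0$, a chain map $(A[[\epsilon]],\delta)\to(A,\mathrm{d})$, and $[\varpi]^i\colon\mathsf{B}^i\to\mathsf{A}^i$ the induced map in degree $i$. *)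

theory Defs
  imports Complex_Main "HOL-Library.Function_Algebras"
begin

text \<open>Cohomology of a degree-1 operator D on a graded space with homogeneous
pieces C i (degrees are integers).  Cohomology classes are cosets z + B^i.\<close>

definition cocycles :: "('v::ab_group_add \<Rightarrow> 'v) \<Rightarrow> (int \<Rightarrow> 'v set) \<Rightarrow> int \<Rightarrow> 'v set" where
  "cocycles D C i = {x \<in> C i. D x = 0}"

definition coboundaries :: "('v::ab_group_add \<Rightarrow> 'v) \<Rightarrow> (int \<Rightarrow> 'v set) \<Rightarrow> int \<Rightarrow> 'v set" where
  "coboundaries D C i = D ` C (i - 1)"

definition cls :: "('v::ab_group_add \<Rightarrow> 'v) \<Rightarrow> (int \<Rightarrow> 'v set) \<Rightarrow> int \<Rightarrow> 'v \<Rightarrow> 'v set" where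
  "cls D C i z = (\<lambda>b. z + b) ` coboundaries D C i"

definition cohom :: "('v::ab_group_add \<Rightarrow> 'v) \<Rightarrow> (int \<Rightarrow> 'v set) \<Rightarrow> int \<Rightarrow> 'v set set" where
  "cohom D C i = cls D C i ` cocycles D C i"

definition induced ::
  "('v \<Rightarrow> 'w::ab_group_add) \<Rightarrow> ('w \<Rightarrow> 'w) \<Rightarrow> (int \<Rightarrow> 'w set) \<Rightarrow> int \<Rightarrow> 'v set \<Rightarrow> 'w set" where
  "induced phi D' C' i c = cls D' C' i (phi (SOME z. z \<in> c))"

text \<open>Homogeneous elements of degree i of A[[eps]] (eps has degree 0):
  sequences of coefficients all lying in A^i.\<close>
definition pser :: "(int \<Rightarrow> 'v set) \<Rightarrow> int \<Rightarrow> (nat \<Rightarrow> 'v) set" where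
  "pser A i = {f. \<forall>n. f n \<in> A i}"

text \<open>delta = sum_n eps^n d_n acting on formal power series.\<close>
definition delta :: "(nat \<Rightarrow> 'v \<Rightarrow> 'v::ab_group_add) \<Rightarrow> (nat \<Rightarrow> 'v) \<Rightarrow> nat \<Rightarrow> 'v" where
  "delta d f = (\<lambda>n. \<Sum>p\<le>n. d p (f (n - p)))"

definition varpi :: "(nat \<Rightarrow> 'v) \<Rightarrow> 'v" where
  "varpi f = f 0"

end

theory Submission
  imports Defs
begin

theorem lemma7p14:
  fixes scale :: "'k::field \<Rightarrow> 'v::ab_group_add \<Rightarrow> 'v"
    and A :: "int \<Rightarrow> 'v set"
    and d :: "nat \<Rightarrow> 'v \<Rightarrow> 'v"
    and i :: int
  assumes vs: "vector_space scale"
    and sub: "\<And>j. module.subspace scale (A j)"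
    and lin: "\<And>n. Vector_Spaces.linear scale scale (d n)"
    and deg: "\<And>n j x. x \<in> A j \<Longrightarrow> d n x \<in> A (j + 1)"
    and flat: "\<And>j f. f \<in> pser A j \<Longrightarrow> delta d (delta d f) = (\<lambda>n. 0)"
    and vanish: "cohom (d 0) A (i + 1) = {cls (d 0) A (i + 1) 0}"
  shows "induced varpi (d 0) A i ` cohom (delta d) (pser A) i = cohom (d 0) A i"
proof -
  have md: "module scale" using vs by (simp add: vector_space_def module_def)
  have A0: "\<And>j. 0 \<in> A j" using module.subspace_0[OF md sub] .
  have Aadd: "\<And>j x y. x \<in> A j \<Longrightarrow> y \<in> A j \<Longrightarrow> x + y \<in> A j"
    using module.subspace_add[OF md sub] .
  have Aneg: "\<And>j x. x \<in> A j \<Longrightarrow> - x \<in> A j"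
    using module.subspace_neg[OF md sub] .
  have Asum: "\<And>j f (B::nat set). (\<And>x. x \<in> B \<Longrightarrow> f x \<in> A j) \<Longrightarrow> sum f B \<in> A j"
    using module.subspace_sum[OF md sub] .
  have dadd: "\<And>n a b. d n (a + b) = d n a + d n b"
    using lin unfolding Vector_Spaces.linear_iff by blast
  then have addv: "\<And>n. additive (d n)" by (simp add: additive_def)
  have d0z: "\<And>n. d n 0 = 0" using additive.zero[OF addv] .
  have dneg: "\<And>n a. d n (- a) = - d n a" using additive.minus[OF addv] .
  have cob0: "\<And>j. 0 \<in> coboundaries (d 0) A j"
    unfolding coboundaries_def using A0 d0z by (metis image_eqI)
  have clsshift: "cls (d 0) A j (z + d 0 b) = cls (d 0) A j z" if b: "b \<in> A (j - 1)" for j z b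
  proof -
    have "(\<lambda>c. z + d 0 b + c) ` (d 0 ` A (j - 1)) = (\<lambda>c. z + c) ` (d 0 ` A (j - 1))"
    proof (intro equalityI subsetI)
      fix y assume "y \<in> (\<lambda>c. z + d 0 b + c) ` (d 0 ` A (j - 1))"
      then obtain a where a: "a \<in> A (j - 1)" "y = z + d 0 b + d 0 a" by auto
      then have "y = z + d 0 (b + a)" by (simp add: dadd add.assoc)
      moreover have "b + a \<in> A (j - 1)" using Aadd a b by blast
      ultimately show "y \<in> (\<lambda>c. z + c) ` (d 0 ` A (j - 1))" by blast
    next
      fix y assume "y \<in> (\<lambda>c. z + c) ` (d 0 ` A (j - 1))"
      then obtain a where a: "a \<in> A (j - 1)" "y = z + d 0 a" by auto
      have "d 0 (- b + a) = - d 0 b + d 0 a" by (simp only: dadd dneg)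
      then have "y = z + d 0 b + d 0 (- b + a)" using a(2) by simp
      moreover have "- b + a \<in> A (j - 1)" using Aadd Aneg a b by blast
      ultimately show "y \<in> (\<lambda>c. z + d 0 b + c) ` (d 0 ` A (j - 1))" by blast
    qed
    then show ?thesis unfolding cls_def coboundaries_def by simp
  qed
  have delta0: "\<And>g. delta d g 0 = d 0 (g 0)" by (simp add: delta_def)
  have zpser: "(\<lambda>n. 0) \<in> pser A j" for j by (simp add: pser_def A0)
  have delta_zero: "delta d (\<lambda>n. 0) = (\<lambda>n. 0)" by (simp add: delta_def d0z)
  have cobd0: "(\<lambda>n. 0) \<in> coboundaries (delta d) (pser A) j" for j
    unfolding coboundaries_def using zpser delta_zero by (metis image_eqI)
  have some_cls: "\<exists>g \<in> pser A (i - 1). (SOME z. z \<in> cls (delta d) (pser A) i f) = f + delta d g" for f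
  proof -
    have "f = f + (\<lambda>n. 0)" by (simp add: zero_fun_def[symmetric])
    then have "f \<in> cls (delta d) (pser A) i f" unfolding cls_def using cobd0[of i]
      by (rule image_eqI)
    then have "(SOME z. z \<in> cls (delta d) (pser A) i f) \<in> cls (delta d) (pser A) i f"
      by (rule someI[where P="\<lambda>z. z \<in> cls (delta d) (pser A) i f"])
    then obtain g where "g \<in> pser A (i - 1)" "(SOME z. z \<in> cls (delta d) (pser A) i f) = f + delta d g"
      unfolding cls_def coboundaries_def by blast
    then show ?thesis by blast
  qed
  show ?thesis
  proof (intro equalityI subsetI)
    fix c assume "c \<in> induced varpi (d 0) A i ` cohom (delta d) (pser A) i"
    then obtain f where f: "f \<in> cocycles (delta d) (pser A) i"
      and c: "c = induced varpi (d 0) A i (cls (delta d) (pser A) i f)"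
      unfolding cohom_def by auto
    obtain g where g: "g \<in> pser A (i - 1)"
      and z: "(SOME z. z \<in> cls (delta d) (pser A) i f) = f + delta d g"
      using some_cls by blast
    have c2: "c = cls (d 0) A i (f 0 + d 0 (g 0))"
      using c z by (simp add: induced_def varpi_def delta0)
    have f0: "f 0 \<in> A i" "d 0 (f 0) = 0" using f
      by (auto simp: cocycles_def pser_def delta0 dest: fun_cong[where x=0])
    have g0: "g 0 \<in> A (i - 1)" using g by (simp add: pser_def)
    have "d 0 (g 0) \<in> A i" using deg[OF g0] by simp
    moreover have "d 0 (d 0 (g 0)) = 0"
      using fun_cong[OF flat[OF g], of 0] by (simp add: delta0)
    ultimately have "f 0 + d 0 (g 0) \<in> cocycles (d 0) A i"
      using f0 Aadd by (simp add: cocycles_def dadd)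
    then show "c \<in> cohom (d 0) A i" unfolding cohom_def c2 by blast
  next
    fix c assume "c \<in> cohom (d 0) A i"
    then obtain x where x: "x \<in> A i" "d 0 x = 0" and c: "c = cls (d 0) A i x"
      unfolding cohom_def cocycles_def by auto
    define W where "W y = (SOME w. w \<in> A i \<and> d 0 w = y)" for y
    define F0 where "F0 = (\<lambda>k::nat. if k = 0 then x else 0)"
    define F where "F = rec_nat F0 (\<lambda>n Fn. Fn(Suc n := - W (delta d Fn (Suc n))))"
    have F_0: "F 0 = F0" by (simp add: F_def)
    have F_Suc: "F (Suc n) = (F n)(Suc n := - W (delta d (F n) (Suc n)))" for n
      by (simp add: F_def)
    have inv: "F n \<in> pser A i \<and> (\<forall>k>n. F n k = 0) \<and> (\<forall>m\<le>n. delta d (F n) m = 0) \<and> F n 0 = x" for n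
    proof (induction n)
      case 0
      then show ?case using x A0 by (auto simp: F_0 F0_def pser_def delta0)
    next
      case (Suc n)
      let ?Fn = "F n"
      let ?y = "delta d ?Fn (Suc n)"
      have Fn: "?Fn \<in> pser A i" "\<And>k. k > n \<Longrightarrow> ?Fn k = 0" "\<And>m. m \<le> n \<Longrightarrow> delta d ?Fn m = 0"
        "?Fn 0 = x" using Suc.IH by auto
      have yA: "?y \<in> A (i + 1)" unfolding delta_def
        using Fn(1) by (intro Asum deg) (auto simp: pser_def)
      have "delta d (delta d ?Fn) (Suc n) = 0" using flat[OF Fn(1)] by simp
      moreover have "delta d (delta d ?Fn) (Suc n) = d 0 ?y + (\<Sum>q\<le>n. d (Suc q) (delta d ?Fn (n - q)))"
        unfolding delta_def[of d "delta d ?Fn"] by (simp only: sum.atMost_Suc_shift) simp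
      ultimately have "d 0 ?y + (\<Sum>q\<le>n. d (Suc q) (delta d ?Fn (n - q))) = 0" by simp
      moreover have "(\<Sum>q\<le>n. d (Suc q) (delta d ?Fn (n - q))) = 0"
        using Fn(3) d0z by simp
      ultimately have dy: "d 0 ?y = 0" by simp
      have "cls (d 0) A (i + 1) ?y \<in> cohom (d 0) A (i + 1)"
        unfolding cohom_def cocycles_def using yA dy by blast
      then have "cls (d 0) A (i + 1) ?y = cls (d 0) A (i + 1) 0" using vanish by blast
      moreover have "?y \<in> cls (d 0) A (i + 1) ?y" unfolding cls_def using cob0
        by (metis add.right_neutral image_eqI)
      ultimately have "?y \<in> coboundaries (d 0) A (i + 1)" unfolding cls_def by simp
      then have "\<exists>w. w \<in> A i \<and> d 0 w = ?y" unfolding coboundaries_def by auto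
      then have w: "W ?y \<in> A i" "d 0 (W ?y) = ?y" unfolding W_def by (metis (mono_tags, lifting) someI)+
      have P1: "F (Suc n) \<in> pser A i" using Fn(1) w Aneg by (auto simp: F_Suc pser_def)
      have P2: "\<forall>k>Suc n. F (Suc n) k = 0" using Fn(2) by (simp add: F_Suc)
      have P3: "delta d (F (Suc n)) m = 0" if m: "m \<le> Suc n" for m
      proof (cases "m = Suc n")
        case True
        have e0: "delta d (F (Suc n)) (Suc n) = d 0 (F (Suc n) (Suc n)) + (\<Sum>p\<le>n. d (Suc p) (F (Suc n) (n - p)))"
          unfolding delta_def[of d "F (Suc n)"] by (simp only: sum.atMost_Suc_shift) simp
        have e01: "(\<Sum>p\<le>n. d (Suc p) (F (Suc n) (n - p))) = (\<Sum>p\<le>n. d (Suc p) (?Fn (n - p)))"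
          by (intro sum.cong) (auto simp: F_Suc)
        have e02: "F (Suc n) (Suc n) = - W ?y" by (simp add: F_Suc)
        have e1: "delta d (F (Suc n)) (Suc n) = d 0 (- W ?y) + (\<Sum>p\<le>n. d (Suc p) (?Fn (n - p)))"
          using e0 e01 e02 by simp
        have e2: "?y = (\<Sum>p\<le>n. d (Suc p) (?Fn (n - p)))"
          unfolding delta_def[of d "F n"] using Fn(2)[of "Suc n"] d0z by (simp only: sum.atMost_Suc_shift) simp
        show ?thesis using True e1 e2 w dneg by simp
      next
        case False
        then have "m \<le> n" using m by simp
        then have "delta d (F (Suc n)) m = delta d ?Fn m"
          unfolding delta_def F_Suc by (intro sum.cong) auto
        then show ?thesis using Fn(3) \<open>m \<le> n\<close> by simp
      qed
      have P4: "F (Suc n) 0 = x" using Fn(4) by (simp add: F_Suc)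
      show ?case using P1 P2 P3 P4 by blast
    qed
    define f where "f k = F k k" for k
    have agree: "k \<le> n \<Longrightarrow> f k = F n k" for k n
    proof (induction n)
      case 0 then show ?case by (simp add: f_def)
    next
      case (Suc n)
      then show ?case by (cases "k = Suc n") (auto simp: f_def F_Suc)
    qed
    have fp: "f \<in> pser A i" using inv unfolding f_def pser_def by blast
    have fd: "delta d f = (\<lambda>n. 0)"
    proof
      fix m
      have "delta d f m = delta d (F m) m" unfolding delta_def
        by (intro sum.cong) (auto simp: agree[of _ m])
      then show "delta d f m = 0" using inv[of m] by simp
    qed
    have fx: "f 0 = x" using inv[of 0] by (simp add: f_def)
    have fc: "f \<in> cocycles (delta d) (pser A) i" using fp fd by (simp add: cocycles_def zero_fun_def)
    obtain g where g: "g \<in> pser A (i - 1)"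
      and z: "(SOME z. z \<in> cls (delta d) (pser A) i f) = f + delta d g"
      using some_cls by blast
    have g0: "g 0 \<in> A (i - 1)" using g by (simp add: pser_def)
    have "induced varpi (d 0) A i (cls (delta d) (pser A) i f) = cls (d 0) A i (x + d 0 (g 0))"
      using z fx by (simp add: induced_def varpi_def delta0)
    also have "\<dots> = c" using clsshift[OF g0] c by simp
    finally show "c \<in> induced varpi (d 0) A i ` cohom (delta d) (pser A) i"
      unfolding cohom_def using fc by blast
  qed
qed

end
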